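(* Let $\kappa>-1$, $B=\operatorname{diag}(b_1,\dots,b_n)$, and consider on $T^*V(n,r)$ the flow $$\dot X=P-(1+2\kappa)XP^TX,\qquad \dot P=(1+2\kappa)PX^TP-B^2X+2BXX^TBX+X\Lambda,$$ with $\Lambda=X^TBX-2X^TBXX^TBX-P^TP$. Then on the invariant submanifold $\{(X,P):X^TP=P^TX=0\}$ these equations imply the matrix equation with spectral parameter $\lambda$ $$\frac{d}{dt}L(\lambda)=[L(\lambda),A(\lambda)],$$ $$L(\lambda)=(\mathbf I_n-2XX^T)B(\mathbf I_n-2XX^T)+2\lambda\Phi+\lambda^2B,\qquad A(\lambda)=-2\Phi-\lambda B,$$ where $\Phi=PX^T-XP^T$.
   Context: $V(n,r)=\{X\in M_{n,r}(\mathbb R):X^TX=\mathbf I_r\}$, and $T^*V(n,r)$ is realized as the set of pairs $(X,P)$ of real $n\times r$ matrices with $X^TX=\mathbf I_r$, $X^TP+P^TX=0$. The flow is the Hamiltonian flow of $H=\frac12\operatorname{tr}(P^TP)-(\frac12+\kappa)\operatorname{tr}((X^TP)^2)+\frac12\operatorname{tr}(X^TB^2X)-\frac12\operatorname{tr}(X^TBXX^TBX)$ with respect to the canonical symplectic structure restricted from $\mathbb R^{2nr}$. *)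

theory Defs
  imports "HOL-Analysis.Analysis"
begin

definition diag_mat :: "real ^ 'n \<Rightarrow> real ^ 'n ^ 'n" where
  "diag_mat b = (\<chi> i j. if i = j then b $ i else 0)"

definition commutator :: "real ^ 'n ^ 'n \<Rightarrow> real ^ 'n ^ 'n \<Rightarrow> real ^ 'n ^ 'n" where
  "commutator M N = M ** N - N ** M"

end

theory Submission
  imports Defs
begin

lemma bilin_mm: "bilinear ((**) :: real^'m^'n \<Rightarrow> real^'p^'m \<Rightarrow> real^'p^'n)"
  unfolding bilinear_def
  by (auto intro!: linearI simp: matrix_add_ldistrib matrix_scalar_ac scalar_matrix_assoc[symmetric]
      vec_eq_iff matrix_matrix_mult_def sum.distrib algebra_simps sum_distrib_left)

lemma bb_mm: "bounded_bilinear ((**) :: real^'m^'n \<Rightarrow> real^'p^'m \<Rightarrow> real^'p^'n)"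
  using bilin_mm bilinear_conv_bounded_bilinear by blast

lemma lin_tr: "bounded_linear (transpose :: real^'m^'n \<Rightarrow> real^'n^'m)"
  by (auto intro!: linearI simp: linear_conv_bounded_linear[symmetric] vec_eq_iff transpose_def)

lemmas mmsimps = matrix_mul_assoc
  bounded_bilinear.add_left[OF bb_mm] bounded_bilinear.add_right[OF bb_mm]
  bounded_bilinear.diff_left[OF bb_mm] bounded_bilinear.diff_right[OF bb_mm]
  bounded_bilinear.scaleR_left[OF bb_mm] bounded_bilinear.scaleR_right[OF bb_mm]
  bounded_bilinear.minus_left[OF bb_mm] bounded_bilinear.minus_right[OF bb_mm]
  bounded_bilinear.zero_left[OF bb_mm] bounded_bilinear.zero_right[OF bb_mm]
  linear_add[OF bounded_linear.linear[OF lin_tr]] linear_diff[OF bounded_linear.linear[OF lin_tr]]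
  linear_cmul[OF bounded_linear.linear[OF lin_tr]] linear_neg[OF bounded_linear.linear[OF lin_tr]]
  matrix_transpose_mul

lemma tr_diag[simp]: "transpose (diag_mat b) = diag_mat b"
  by (simp add: vec_eq_iff transpose_def diag_mat_def)

lemma ctx: "A ** B = C \<Longrightarrow> Z ** A ** B = Z ** C"
  by (metis matrix_mul_assoc)

lemma phi_alg:
  fixes x p :: "real^'r^'n" and B :: "real^'n^'n"
  assumes h1: "transpose x ** x = mat 1" and h2: "transpose x ** p = 0" and h3: "transpose p ** x = 0"
    and hB: "transpose B = B"
  shows "let dp = (1 + 2 * \<kappa>) *\<^sub>R (p ** transpose x ** p)
           - B ** B ** x
           + 2 *\<^sub>R (B ** x ** transpose x ** B ** x)
           + x ** (transpose x ** B ** x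
                     - 2 *\<^sub>R (transpose x ** B ** x ** transpose x ** B ** x)
                     - transpose p ** p);
         M = (mat 1 - 2 *\<^sub>R (x ** transpose x)) ** B ** (mat 1 - 2 *\<^sub>R (x ** transpose x))
     in p ** transpose p + dp ** transpose x - (x ** transpose dp + p ** transpose p)
        = -(1/2) *\<^sub>R (M ** B - B ** M)"
  using h1 h2 h3 hB
  by (simp add: Let_def mmsimps ctx[OF h1] ctx[OF h2] ctx[OF h3] algebra_simps)


lemma nbn_alg:
  fixes x p :: "real^'r^'n" and B :: "real^'n^'n"
  assumes h1: "transpose x ** x = mat 1" and h2: "transpose x ** p = 0" and h3: "transpose p ** x = 0"
  shows "let N = mat 1 - 2 *\<^sub>R (x ** transpose x);
             dN = 0 - 2 *\<^sub>R (x ** transpose p + p ** transpose x);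
             M = N ** B ** N; F = p ** transpose x - x ** transpose p
         in (N ** B) ** dN + (N ** 0 + dN ** B) ** N = -2 *\<^sub>R (M ** F - F ** M)"
  using h1 h2 h3
  by (simp add: Let_def mmsimps ctx[OF h1] ctx[OF h2] ctx[OF h3] algebra_simps)

lemma comm_alg:
  fixes M F B :: "real^'n^'n"
  shows "commutator (M + (2*lam) *\<^sub>R F + lam^2 *\<^sub>R B) (-2 *\<^sub>R F - lam *\<^sub>R B)
     = -2 *\<^sub>R (M ** F - F ** M) + lam *\<^sub>R (B ** M - M ** B)"
  by (simp add: commutator_def mmsimps algebra_simps power2_eq_square)

lemmas bbd = bounded_bilinear.has_vector_derivative[OF bb_mm]
lemmas trd = bounded_linear.has_vector_derivative[OF lin_tr]
lemmas smd = bounded_linear.has_vector_derivative[OF bounded_linear_scaleR_right]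

theorem theorem9:
  fixes X P :: "real \<Rightarrow> real ^ 'r ^ 'n"
    and b :: "real ^ 'n"
    and \<kappa> :: real
    and T :: "real set" and lam :: real
  assumes kappa: "\<kappa> > -1"
    and T_open: "open T"
    and stiefel: "\<And>t. t \<in> T \<Longrightarrow> transpose (X t) ** X t = mat 1"
    and invariant: "\<And>t. t \<in> T \<Longrightarrow> transpose (X t) ** P t = 0 \<and> transpose (P t) ** X t = 0"
    and eqX: "\<And>t. t \<in> T \<Longrightarrow>
       (X has_vector_derivative
          (P t - (1 + 2 * \<kappa>) *\<^sub>R (X t ** transpose (P t) ** X t))) (at t)"
    and eqP: "\<And>t. t \<in> T \<Longrightarrow>
       (P has_vector_derivative
          ((1 + 2 * \<kappa>) *\<^sub>R (P t ** transpose (X t) ** P t)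
           - diag_mat b ** diag_mat b ** X t
           + 2 *\<^sub>R (diag_mat b ** X t ** transpose (X t) ** diag_mat b ** X t)
           + X t ** (transpose (X t) ** diag_mat b ** X t
                     - 2 *\<^sub>R (transpose (X t) ** diag_mat b ** X t ** transpose (X t) ** diag_mat b ** X t)
                     - transpose (P t) ** P t))) (at t)"
    and t: "t \<in> T"
  shows
    "let B = diag_mat b;
         \<Phi> = (\<lambda>s. P s ** transpose (X s) - X s ** transpose (P s));
         L = (\<lambda>s. (mat 1 - 2 *\<^sub>R (X s ** transpose (X s))) ** B ** (mat 1 - 2 *\<^sub>R (X s ** transpose (X s)))
                  + (2 * lam) *\<^sub>R \<Phi> s + (lam^2) *\<^sub>R B);
         A = (\<lambda>s. - 2 *\<^sub>R \<Phi> s - lam *\<^sub>R B)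
     in (L has_vector_derivative commutator (L t) (A t)) (at t)"
proof -
  have h1: "transpose (X t) ** X t = mat 1" using stiefel t by blast
  have h2: "transpose (X t) ** P t = 0" and h3: "transpose (P t) ** X t = 0" using invariant t by blast+
  have dX: "(X has_vector_derivative P t) (at t)"
    using eqX[OF t] by (simp add: matrix_mul_assoc[symmetric] h3)
  note dP = eqP[OF t]
  note dXT = trd[OF dX]
  note dPT = trd[OF dP]
  note dQ = bbd[OF dX dXT]
  note dN = has_vector_derivative_diff[OF has_vector_derivative_const smd[OF dQ]]
  note dNB = bbd[OF dN has_vector_derivative_const]
  note dNBN = bbd[OF dNB dN]
  note dPhi = has_vector_derivative_diff[OF bbd[OF dP dXT] bbd[OF dX dPT]]
  note dL = has_vector_derivative_add[OF has_vector_derivative_add[OF dNBN smd[OF dPhi]] has_vector_derivative_const]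
  show ?thesis
    unfolding Let_def
    apply (rule has_vector_derivative_eq_rhs, rule dL)
    apply (simp only: phi_alg[OF h1 h2 h3 tr_diag[of b], of \<kappa>, unfolded Let_def]
       nbn_alg[OF h1 h2 h3, of "diag_mat b", unfolded Let_def])
    apply (subst comm_alg)
    apply (simp add: algebra_simps)
    done
qed

end
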